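(* For any positive integer $k$, there exist nonisomorphic graphs $G'$ and $G''$ that are cospectral with respect to the adjacency matrix and satisfy $Z(G')>Z(G'')+k$.
   Context: The zero forcing number $Z(G)$ is the minimum size of a set $S\subseteq V(G)$ such that, if the vertices of $S$ are colored blue and all others white, repeated application of the rule "a blue vertex with exactly one white neighbor forces that neighbor to become blue" eventually makes every vertex blue. *)

theory Defs
  imports "Jordan_Normal_Form.Char_Poly"
begin

text \<open>A finite simple graph is represented by a number of vertices n
  (vertex set {0..<n}) and an adjacency relation E, which is symmetric
  and irreflexive on the vertex set.\<close>

type_synonym graph = "nat \<times> (nat \<Rightarrow> nat \<Rightarrow> bool)"

definition verts :: "graph \<Rightarrow> nat set" where
  "verts G = {0..<fst G}"

definition adj :: "graph \<Rightarrow> nat \<Rightarrow> nat \<Rightarrow> bool" where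
  "adj G u v \<longleftrightarrow> u \<in> verts G \<and> v \<in> verts G \<and> snd G u v"

definition simple_graph :: "graph \<Rightarrow> bool" where
  "simple_graph G \<longleftrightarrow>
     (\<forall>u\<in>verts G. \<forall>v\<in>verts G. snd G u v \<longleftrightarrow> snd G v u) \<and>
     (\<forall>u\<in>verts G. \<not> snd G u u)"

definition adjacency_matrix :: "graph \<Rightarrow> int mat" where
  "adjacency_matrix G = mat (fst G) (fst G) (\<lambda>(i, j). if adj G i j then 1 else 0)"

text \<open>Cospectral with respect to the adjacency matrix: same eigenvalues with
  multiplicities, i.e. equal characteristic polynomials.\<close>
definition cospectral :: "graph \<Rightarrow> graph \<Rightarrow> bool" where
  "cospectral G H \<longleftrightarrow> char_poly (adjacency_matrix G) = char_poly (adjacency_matrix H)"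

definition graph_iso :: "graph \<Rightarrow> graph \<Rightarrow> bool" where
  "graph_iso G H \<longleftrightarrow> (\<exists>f. bij_betw f (verts G) (verts H) \<and>
      (\<forall>u\<in>verts G. \<forall>v\<in>verts G. adj G u v \<longleftrightarrow> adj H (f u) (f v)))"

text \<open>Vertices that eventually become blue starting from the blue set S under
  the zero forcing color change rule: a blue vertex u all of whose neighbours
  except w are blue (so w is its unique possibly-white neighbour) forces w.\<close>
inductive_set blue_closure :: "graph \<Rightarrow> nat set \<Rightarrow> nat set" for G S where
  init: "v \<in> S \<Longrightarrow> v \<in> blue_closure G S"
| force: "u \<in> blue_closure G S \<Longrightarrow> adj G u w \<Longrightarrow>
          (\<forall>x. adj G u x \<and> x \<noteq> w \<longrightarrow> x \<in> blue_closure G S) \<Longrightarrow>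
          w \<in> blue_closure G S"

definition zero_forcing_set :: "graph \<Rightarrow> nat set \<Rightarrow> bool" where
  "zero_forcing_set G S \<longleftrightarrow> S \<subseteq> verts G \<and> verts G \<subseteq> blue_closure G S"

definition zero_forcing_number :: "graph \<Rightarrow> nat" where
  "zero_forcing_number G = Min (card ` {S. zero_forcing_set G S})"

end

theory Submission
  imports Defs
begin

section \<open>Block diagonal characteristic polynomials\<close>

lemma char_poly_block_diag:
  fixes A D :: "'a :: idom mat"
  assumes A: "A \<in> carrier_mat n n" and D: "D \<in> carrier_mat m m"
  shows "char_poly (four_block_mat A (0\<^sub>m n m) (0\<^sub>m m n) D) = char_poly A * char_poly D"
proof -
  have "char_poly_matrix (four_block_mat A (0\<^sub>m n m) (0\<^sub>m m n) D) =
        four_block_mat (char_poly_matrix A) (0\<^sub>m n m) (0\<^sub>m m n) (char_poly_matrix D)"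
    using A D by (intro eq_matI) (auto simp: char_poly_matrix_def)
  then show ?thesis
    unfolding char_poly_def
    by (simp add: det_four_block_mat_upper_right_zero[of _ n _ m] A D)
qed

definition copies :: "nat \<Rightarrow> nat \<Rightarrow> (nat \<Rightarrow> nat \<Rightarrow> bool) \<Rightarrow> graph" where
  "copies m n e = (m * n, \<lambda>u v. u div n = v div n \<and> e (u mod n) (v mod n))"

lemma fst_copies[simp]: "fst (copies m n e) = m * n"
  by (simp add: copies_def)

lemma adj_copies: "adj (copies m n e) u v \<longleftrightarrow>
   u < m * n \<and> v < m * n \<and> u div n = v div n \<and> e (u mod n) (v mod n)"
  by (auto simp: adj_def verts_def copies_def)

lemma adjmat_copies_Suc:
  assumes "n > 0"
  shows "adjacency_matrix (copies (Suc m) n e) =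
    four_block_mat (adjacency_matrix (n, e)) (0\<^sub>m n (m*n)) (0\<^sub>m (m*n) n) (adjacency_matrix (copies m n e))"
proof (rule eq_matI)
  fix i j assume i: "i < dim_row (four_block_mat (adjacency_matrix (n, e)) (0\<^sub>m n (m*n)) (0\<^sub>m (m*n) n) (adjacency_matrix (copies m n e)))"
    and j: "j < dim_col (four_block_mat (adjacency_matrix (n, e)) (0\<^sub>m n (m*n)) (0\<^sub>m (m*n) n) (adjacency_matrix (copies m n e)))"
  have i': "i < n + m * n" and j': "j < n + m * n" using i j
    by (auto simp: adjacency_matrix_def copies_def)
  have dv: "x \<ge> n \<Longrightarrow> (x - n) div n = x div n - 1" for x
  proof -
    assume x: "x \<ge> n"
    have "x div n = ((x - n) + n) div n" using x by simp
    also have "\<dots> = (x - n) div n + 1" using assms by simp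
    finally show ?thesis by simp
  qed
  have md: "x \<ge> n \<Longrightarrow> (x - n) mod n = x mod n" for x
  proof -
    assume x: "x \<ge> n"
    have "x mod n = ((x - n) + n) mod n" using x by simp
    also have "\<dots> = (x - n) mod n" by simp
    finally show ?thesis by simp
  qed
  have dpos: "x \<ge> n \<Longrightarrow> x div n \<ge> 1" for x
    using assms div_greater_zero_iff[of x n] by linarith
  have d0: "x < n \<Longrightarrow> x div n = 0" for x by simp
  show "adjacency_matrix (copies (Suc m) n e) $$ (i, j) =
    four_block_mat (adjacency_matrix (n, e)) (0\<^sub>m n (m*n)) (0\<^sub>m (m*n) n) (adjacency_matrix (copies m n e)) $$ (i, j)"
  proof (cases "i < n")
    case True
    note ii = True
    show ?thesis
    proof (cases "j < n")
      case True
      have "adj (n, e) i j = e i j" using ii True by (simp add: adj_def verts_def)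
      then show ?thesis using ii True i' j' d0[of i] d0[of j]
        by (simp add: adjacency_matrix_def adj_copies)
    next
      case False
      then show ?thesis using ii i' j' d0[of i] dpos[of j]
        by (simp add: adjacency_matrix_def adj_copies)
    qed
  next
    case False
    note ii = False
    show ?thesis
    proof (cases "j < n")
      case True
      then show ?thesis using ii i' j' d0[of j] dpos[of i]
        by (simp add: adjacency_matrix_def adj_copies)
    next
      case False
      have e1: "(i - n < m * n) = (i < Suc m * n)" "(j - n < m * n) = (j < Suc m * n)"
        using ii False by auto
      have e2: "((i - n) div n = (j - n) div n) = (i div n = j div n)"
        using ii False dv[of i] dv[of j] dpos[of i] dpos[of j] by auto
      show ?thesis using ii False i' j'
        by (simp add: adjacency_matrix_def adj_copies e1 e2 md)
    qed
  qed
qed (auto simp: adjacency_matrix_def copies_def)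

lemma adjmat_carrier: "adjacency_matrix G \<in> carrier_mat (fst G) (fst G)"
  by (simp add: adjacency_matrix_def)

lemma char_poly_copies:
  assumes "n > 0"
  shows "char_poly (adjacency_matrix (copies m n e)) = char_poly (adjacency_matrix (n, e)) ^ m"
proof (induction m)
  case 0
  then show ?case
    by (simp add: char_poly_def char_poly_matrix_def adjacency_matrix_def copies_def)
next
  case (Suc m)
  have "char_poly (adjacency_matrix (copies (Suc m) n e)) =
     char_poly (adjacency_matrix (n, e)) * char_poly (adjacency_matrix (copies m n e))"
    unfolding adjmat_copies_Suc[OF assms]
    by (rule char_poly_block_diag) (auto simp: adjacency_matrix_def copies_def)
  then show ?case using Suc by simp
qed


definition e1 :: "nat \<Rightarrow> nat \<Rightarrow> bool" where
  "e1 u v \<longleftrightarrow> (u = 0 \<and> (v = 1 \<or> v = 2 \<or> v = 3)) \<or> (v = 0 \<and> (u = 1 \<or> u = 2 \<or> u = 3))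
     \<or> (u = 4 \<and> v = 5) \<or> (u = 5 \<and> v = 4)"

definition e2 :: "nat \<Rightarrow> nat \<Rightarrow> bool" where
  "e2 u v \<longleftrightarrow> u < 5 \<and> v < 5 \<and> (u = v + 1 \<or> v = u + 1)"

lemma six: "(i::nat) < 6 \<longleftrightarrow> i = 0 \<or> i = 1 \<or> i = 2 \<or> i = 3 \<or> i = 4 \<or> i = 5" by auto

lemma sum6: "(\<Sum>k\<in>{0..<6::nat}. f k) = f 0 + f 1 + f 2 + f 3 + f 4 + (f 5 :: rat)"
  by (simp add: numeral_eq_Suc atLeast0LessThan lessThan_Suc add.commute add.left_commute)

definition PP :: "rat mat" where "PP = mat 6 6 (\<lambda>(i,j). [[0, -1, 0, 0, 1, 0], [-1, 0, 0, 0, 0, 1], [0, 0, -1, -1, 0, 0], [-1, 0, 0, 0, 0, -1], [0, -1, 0, 0, -1, 0], [0, 1, -1, 0, 0, 0]] ! i ! j)"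
definition QQ :: "rat mat" where "QQ = mat 6 6 (\<lambda>(i,j). [[0, -1/2, 0, -1/2, 0, 0], [-1/2, 0, 0, 0, -1/2, 0], [-1/2, 0, 0, 0, -1/2, -1], [1/2, 0, -1, 0, 1/2, 1], [1/2, 0, 0, 0, -1/2, 0], [0, 1/2, 0, -1/2, 0, 0]] ! i ! j)"
definition M1 :: "rat mat" where "M1 = mat 6 6 (\<lambda>(i,j). [[0,1,1,1,0,0],[1,0,0,0,0,0],[1,0,0,0,0,0],[1,0,0,0,0,0],[0,0,0,0,0,1],[0,0,0,0,1,0]] ! i ! j)"
definition M2 :: "rat mat" where "M2 = mat 6 6 (\<lambda>(i,j). [[0,1,0,0,0,0],[1,0,1,0,0,0],[0,1,0,1,0,0],[0,0,1,0,1,0],[0,0,0,1,0,0],[0,0,0,0,0,0]] ! i ! j)"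

lemma M1_eq: "map_mat rat_of_int (adjacency_matrix (6, e1)) = M1"
  apply (rule eq_matI)
  apply (simp_all add: M1_def adjacency_matrix_def adj_def verts_def)
  apply (simp only: six)
  apply (elim disjE)
  apply (simp_all add: e1_def)
  done

lemma M2_eq: "map_mat rat_of_int (adjacency_matrix (6, e2)) = M2"
  apply (rule eq_matI)
  apply (simp_all add: M2_def adjacency_matrix_def adj_def verts_def)
  apply (simp only: six)
  apply (elim disjE)
  apply (simp_all add: e2_def)
  done

lemma PQ: "PP * QQ = 1\<^sub>m 6"
  by (rule eq_matI) (simp_all add: PP_def QQ_def scalar_prod_def sum6, auto simp: six)

lemma QP: "QQ * PP = 1\<^sub>m 6"
  by (rule eq_matI) (simp_all add: PP_def QQ_def scalar_prod_def sum6, auto simp: six)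

lemma PM: "PP * M1 = M2 * PP"
  by (rule eq_matI) (simp_all add: PP_def M1_def M2_def scalar_prod_def sum6, auto simp: six)

lemma M_similar: "similar_mat M2 M1"
proof (rule similar_matI[of _ _ PP QQ 6])
  have c: "PP \<in> carrier_mat 6 6" "QQ \<in> carrier_mat 6 6" "M1 \<in> carrier_mat 6 6" "M2 \<in> carrier_mat 6 6"
    by (auto simp: PP_def QQ_def M1_def M2_def)
  show "{M2, M1, PP, QQ} \<subseteq> carrier_mat 6 6" using c by auto
  show "PP * QQ = 1\<^sub>m 6" by (rule PQ)
  show "QQ * PP = 1\<^sub>m 6" by (rule QP)
  have "M2 = M2 * (PP * QQ)" using c PQ by simp
  also have "\<dots> = (M2 * PP) * QQ" using c by (simp add: assoc_mult_mat)
  also have "\<dots> = PP * M1 * QQ" using PM by simp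
  finally show "M2 = PP * M1 * QQ" .
qed

lemma cospec_base: "char_poly (adjacency_matrix (6, e1)) = char_poly (adjacency_matrix (6, e2))"
proof -
  have h1: "char_poly M1 = map_poly rat_of_int (char_poly (adjacency_matrix (6, e1)))"
    unfolding M1_eq[symmetric] by (rule of_int_hom.char_poly_hom[OF adjmat_carrier])
  have h2: "char_poly M2 = map_poly rat_of_int (char_poly (adjacency_matrix (6, e2)))"
    unfolding M2_eq[symmetric] by (rule of_int_hom.char_poly_hom[OF adjmat_carrier])
  have eq: "map_poly rat_of_int (char_poly (adjacency_matrix (6, e1))) =
        map_poly rat_of_int (char_poly (adjacency_matrix (6, e2)))"
    using h1 h2 char_poly_similar[OF M_similar] by (simp only:)
  show ?thesis
  proof (rule poly_eqI)
    fix i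
    have "coeff (map_poly rat_of_int (char_poly (adjacency_matrix (6, e1)))) i =
          coeff (map_poly rat_of_int (char_poly (adjacency_matrix (6, e2)))) i"
      using eq by (simp only:)
    then show "coeff (char_poly (adjacency_matrix (6, e1))) i = coeff (char_poly (adjacency_matrix (6, e2))) i"
      by (simp add: coeff_map_poly)
  qed
qed


section \<open>Zero forcing\<close>

lemma twin_not_blue:
  assumes ab: "a \<noteq> b" and aS: "a \<notin> S" and bS: "b \<notin> S"
    and tw: "\<forall>x. x \<noteq> a \<and> x \<noteq> b \<longrightarrow> (adj G x a \<longleftrightarrow> adj G x b)"
  shows "a \<notin> blue_closure G S"
proof -
  have "x \<in> blue_closure G S \<Longrightarrow> x \<noteq> a \<and> x \<noteq> b" for x
  proof (induction rule: blue_closure.induct)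
    case (init v)
    then show ?case using aS bS by auto
  next
    case (force u w)
    show ?case
    proof (rule ccontr)
      assume "\<not> (w \<noteq> a \<and> w \<noteq> b)"
      then have "w = a \<or> w = b" by auto
      then show False
      proof
        assume wa: "w = a"
        have "adj G u b" using force tw wa by auto
        then show False using force wa ab by blast
      next
        assume wb: "w = b"
        have "adj G u a" using force tw wb by auto
        then show False using force wb ab by blast
      qed
    qed
  qed
  then show ?thesis by auto
qed

lemma zfs_twin:
  assumes "zero_forcing_set G S" "a \<in> verts G" "a \<noteq> b"
    and "\<forall>x. x \<noteq> a \<and> x \<noteq> b \<longrightarrow> (adj G x a \<longleftrightarrow> adj G x b)"
  shows "a \<in> S \<or> b \<in> S"
  using twin_not_blue[of a b S G] assms unfolding zero_forcing_set_def by auto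

lemma div_mod6: "(x::nat) = 6 * (x div 6) + x mod 6" by simp

lemma twins_copies:
  assumes "a < 6" "b < 6" "a \<noteq> b"
    and tw: "\<forall>r<6. r \<noteq> a \<and> r \<noteq> b \<longrightarrow> (e r a \<longleftrightarrow> e r b)"
    and c: "c < m"
  shows "\<forall>x. x \<noteq> 6*c+a \<and> x \<noteq> 6*c+b \<longrightarrow>
     (adj (copies m 6 e) x (6*c+a) \<longleftrightarrow> adj (copies m 6 e) x (6*c+b))"
proof (intro allI impI)
  fix x assume x: "x \<noteq> 6*c+a \<and> x \<noteq> 6*c+b"
  have lt: "6*c+a < m*6" "6*c+b < m*6" using assms by auto
  have da: "(6*c+a) div 6 = c" "(6*c+a) mod 6 = a" "(6*c+b) div 6 = c" "(6*c+b) mod 6 = b"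
    using assms by auto
  show "adj (copies m 6 e) x (6*c+a) \<longleftrightarrow> adj (copies m 6 e) x (6*c+b)"
  proof (cases "x div 6 = c")
    case True
    then have "x mod 6 \<noteq> a" "x mod 6 \<noteq> b" using x div_mod6[of x] by auto
    then have "e (x mod 6) a \<longleftrightarrow> e (x mod 6) b" using tw by auto
    then show ?thesis unfolding adj_copies using lt da by auto
  next
    case False
    then show ?thesis unfolding adj_copies using da by auto
  qed
qed

lemma Z1_card:
  assumes S: "zero_forcing_set (copies m 6 e1) S"
  shows "card S \<ge> 3 * m"
proof -
  let ?G = "copies m 6 e1"
  define B where "B c = {6*c+1 ..< 6*c+6}" for c :: nat
  have fin: "finite S" using S unfolding zero_forcing_set_def verts_def
    by (auto intro: finite_subset)
  have pair: "6*c+a \<in> S \<or> 6*c+b \<in> S"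
    if "c < m" "a < 6" "b < 6" "a \<noteq> b" "\<forall>r<6. r \<noteq> a \<and> r \<noteq> b \<longrightarrow> (e1 r a \<longleftrightarrow> e1 r b)" for c a b
  proof (rule zfs_twin[OF S])
    show "6*c+a \<in> verts ?G" using that by (auto simp: verts_def)
    show "6*c+a \<noteq> 6*c+b" using that by auto
    show "\<forall>x. x \<noteq> 6*c+a \<and> x \<noteq> 6*c+b \<longrightarrow> (adj ?G x (6*c+a) \<longleftrightarrow> adj ?G x (6*c+b))"
      using twins_copies[of a b e1 c m] that by auto
  qed
  have three: "card (S \<inter> B c) \<ge> 3" if c: "c < m" for c
  proof -
    have p12: "6*c+1 \<in> S \<or> 6*c+2 \<in> S" using pair[OF c, of 1 2] by (auto simp: e1_def)
    have p13: "6*c+1 \<in> S \<or> 6*c+3 \<in> S" using pair[OF c, of 1 3] by (auto simp: e1_def)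
    have p23: "6*c+2 \<in> S \<or> 6*c+3 \<in> S" using pair[OF c, of 2 3] by (auto simp: e1_def)
    have p45: "6*c+4 \<in> S \<or> 6*c+5 \<in> S" using pair[OF c, of 4 5] by (auto simp: e1_def)
    obtain z where z: "z \<in> S" "z = 6*c+4 \<or> z = 6*c+5" using p45 by auto
    obtain x y where xy: "x \<in> S" "y \<in> S" "x \<in> {6*c+1, 6*c+2, 6*c+3}" "y \<in> {6*c+1, 6*c+2, 6*c+3}" "x \<noteq> y"
    proof (cases "6*c+1 \<in> S")
      case True
      from p23 show ?thesis
      proof
        assume "6*c+2 \<in> S" then show ?thesis using that[of "6*c+1" "6*c+2"] True by simp
      next
        assume "6*c+3 \<in> S" then show ?thesis using that[of "6*c+1" "6*c+3"] True by simp
      qed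
    next
      case False
      then have "6*c+2 \<in> S" "6*c+3 \<in> S" using p12 p13 by auto
      then show ?thesis using that[of "6*c+2" "6*c+3"] by simp
    qed
    have sub: "{x, y, z} \<subseteq> S \<inter> B c" using xy z by (auto simp: B_def)
    have "card {x, y, z} = 3" using xy z by auto
    moreover have "card {x, y, z} \<le> card (S \<inter> B c)" using sub fin by (intro card_mono) auto
    ultimately show ?thesis by simp
  qed
  have disj: "\<forall>c\<in>{..<m}. \<forall>d\<in>{..<m}. c \<noteq> d \<longrightarrow> (S \<inter> B c) \<inter> (S \<inter> B d) = {}"
  proof (intro ballI impI)
    fix c d :: nat assume "c \<noteq> d"
    then have "B c \<inter> B d = {}" unfolding B_def by (cases "c < d") auto
    then show "(S \<inter> B c) \<inter> (S \<inter> B d) = {}" by auto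
  qed
  have "card (\<Union>c\<in>{..<m}. S \<inter> B c) = (\<Sum>c\<in>{..<m}. card (S \<inter> B c))"
    by (rule card_UN_disjoint) (use disj fin in auto)
  also have "\<dots> \<ge> (\<Sum>c\<in>{..<m}. 3)" by (intro sum_mono three) auto
  finally have "card (\<Union>c\<in>{..<m}. S \<inter> B c) \<ge> 3 * m" by simp
  moreover have "card (\<Union>c\<in>{..<m}. S \<inter> B c) \<le> card S" using fin by (intro card_mono) auto
  ultimately show ?thesis by linarith
qed


lemma Z2_set:
  assumes "c < m" "r < 5"
  shows "6*c + r \<in> blue_closure (copies m 6 e2) {x. x < m*6 \<and> (x mod 6 = 0 \<or> x mod 6 = 5)}"
proof -
  let ?S = "{x. x < m*6 \<and> (x mod 6 = 0 \<or> x mod 6 = 5)}"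
  let ?G = "copies m 6 e2"
  have "r < 5 \<Longrightarrow> \<forall>r'\<le>r. 6*c + r' \<in> blue_closure ?G ?S" for r
  proof (induction r)
    case 0
    then show ?case using assms(1) by (auto intro: blue_closure.init)
  next
    case (Suc r)
    have IH: "\<forall>r'\<le>r. 6*c + r' \<in> blue_closure ?G ?S" using Suc by auto
    have "6*c + Suc r \<in> blue_closure ?G ?S"
    proof (rule blue_closure.force[of "6*c + r"])
      show "6*c + r \<in> blue_closure ?G ?S" using IH by auto
      show "adj ?G (6*c + r) (6*c + Suc r)"
        unfolding adj_copies using Suc.prems assms(1) by (auto simp: e2_def)
      show "\<forall>x. adj ?G (6*c + r) x \<and> x \<noteq> 6*c + Suc r \<longrightarrow> x \<in> blue_closure ?G ?S"
      proof (intro allI impI)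
        fix x assume x: "adj ?G (6*c + r) x \<and> x \<noteq> 6*c + Suc r"
        then have d: "x div 6 = c" and ee: "e2 r (x mod 6)"
          unfolding adj_copies using Suc.prems by auto
        have "x mod 6 = r + 1 \<or> r = x mod 6 + 1" using ee by (auto simp: e2_def)
        moreover have "x = 6*c + x mod 6" using d div_mod6[of x] by simp
        ultimately have xe: "x = 6*c + (r - 1)" using x by auto
        have "6*c + (r - 1) \<in> blue_closure ?G ?S" using IH by simp
        then show "x \<in> blue_closure ?G ?S" using xe by simp
      qed
    qed
    then show ?case using IH le_Suc_eq by auto
  qed
  then show ?thesis using assms by auto
qed

lemma Z2_zfs: "zero_forcing_set (copies m 6 e2) {x. x < m*6 \<and> (x mod 6 = 0 \<or> x mod 6 = 5)}"
  unfolding zero_forcing_set_def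
proof
  let ?S = "{x. x < m*6 \<and> (x mod 6 = 0 \<or> x mod 6 = 5)}"
  show "?S \<subseteq> verts (copies m 6 e2)" by (auto simp: verts_def)
  show "verts (copies m 6 e2) \<subseteq> blue_closure (copies m 6 e2) ?S"
  proof
    fix x assume "x \<in> verts (copies m 6 e2)"
    then have x: "x < m*6" by (simp add: verts_def)
    have c: "x div 6 < m" using x by (simp add: less_mult_imp_div_less)
    show "x \<in> blue_closure (copies m 6 e2) ?S"
    proof (cases "x mod 6 = 5")
      case True
      then show ?thesis using x by (auto intro: blue_closure.init)
    next
      case False
      then have "x mod 6 < 5" by auto
      then show ?thesis using Z2_set[OF c, of "x mod 6"] div_mod6[of x] by simp
    qed
  qed
qed

lemma Z2_card: "card {x. x < m*6 \<and> (x mod 6 = 0 \<or> x mod 6 = 5)} \<le> 2 * m"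
proof -
  have "{x. x < m*6 \<and> (x mod 6 = 0 \<or> x mod 6 = 5)} \<subseteq> (\<lambda>c. 6*c) ` {..<m} \<union> (\<lambda>c. 6*c+5) ` {..<m}"
  proof
    fix x assume "x \<in> {x. x < m*6 \<and> (x mod 6 = 0 \<or> x mod 6 = 5)}"
    then have x: "x < m*6" "x mod 6 = 0 \<or> x mod 6 = 5" by auto
    have c: "x div 6 \<in> {..<m}" using x by (simp add: less_mult_imp_div_less)
    show "x \<in> (\<lambda>c. 6*c) ` {..<m} \<union> (\<lambda>c. 6*c+5) ` {..<m}"
    proof (cases "x mod 6 = 0")
      case True
      then have "x = 6 * (x div 6)" using div_mod6[of x] by simp
      then have "x \<in> (\<lambda>c. 6*c) ` {..<m}" using c by (rule image_eqI)
      then show ?thesis by blast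
    next
      case False
      then have "x = 6 * (x div 6) + 5" using x(2) div_mod6[of x] by simp
      then have "x \<in> (\<lambda>c. 6*c+5) ` {..<m}" using c by (rule image_eqI)
      then show ?thesis by blast
    qed
  qed
  then have "card {x. x < m*6 \<and> (x mod 6 = 0 \<or> x mod 6 = 5)} \<le> card ((\<lambda>c. 6*c) ` {..<m} \<union> (\<lambda>c. 6*c+5) ` {..<m})"
    by (intro card_mono) auto
  also have "\<dots> \<le> card ((\<lambda>c. 6*c) ` {..<m}) + card ((\<lambda>c. 6*c+5) ` {..<m})" by (rule card_Un_le)
  also have "\<dots> \<le> m + m" using card_image_le[of "{..<m}"] by (intro add_mono) auto
  finally show ?thesis by simp
qed

lemma zfn_le: "zero_forcing_set G S \<Longrightarrow> zero_forcing_number G \<le> card S"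
proof -
  assume S: "zero_forcing_set G S"
  have "{S. zero_forcing_set G S} \<subseteq> Pow (verts G)" by (auto simp: zero_forcing_set_def)
  then have "finite {S. zero_forcing_set G S}" by (rule finite_subset) (simp add: verts_def)
  then show ?thesis unfolding zero_forcing_number_def using S by (intro Min_le) auto
qed

lemma zfn_ge:
  assumes "\<And>S. zero_forcing_set G S \<Longrightarrow> card S \<ge> N"
  shows "zero_forcing_number G \<ge> N"
proof -
  have "{S. zero_forcing_set G S} \<subseteq> Pow (verts G)" by (auto simp: zero_forcing_set_def)
  then have fin: "finite {S. zero_forcing_set G S}" by (rule finite_subset) (simp add: verts_def)
  have "zero_forcing_set G (verts G)"
    unfolding zero_forcing_set_def by (auto intro: blue_closure.init)
  then have ne: "card ` {S. zero_forcing_set G S} \<noteq> {}" by auto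
  have "zero_forcing_number G \<in> card ` {S. zero_forcing_set G S}"
    unfolding zero_forcing_number_def using fin ne by (intro Min_in) auto
  then show ?thesis using assms by auto
qed

section \<open>Nonisomorphism and simplicity\<close>

lemma iso_no_isolated:
  assumes "graph_iso G H" "\<forall>v\<in>verts G. \<exists>u. adj G v u" "w \<in> verts H"
  shows "\<exists>u. adj H w u"
proof -
  obtain f where f: "bij_betw f (verts G) (verts H)"
    "\<forall>u\<in>verts G. \<forall>v\<in>verts G. adj G u v \<longleftrightarrow> adj H (f u) (f v)"
    using assms(1) unfolding graph_iso_def by auto
  obtain v where v: "v \<in> verts G" "w = f v" using f(1) assms(3) by (auto simp: bij_betw_def)
  obtain u where u: "adj G v u" using assms(2) v by auto
  then have "u \<in> verts G" by (simp add: adj_def)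
  then show ?thesis using f(2) u v by blast
qed

definition partner :: "nat \<Rightarrow> nat" where
  "partner r = (if r = 0 then 1 else if r \<le> 3 then 0 else if r = 4 then 5 else 4)"

lemma G1_no_isolated: "\<forall>v\<in>verts (copies m 6 e1). \<exists>u. adj (copies m 6 e1) v u"
proof
  fix v assume "v \<in> verts (copies m 6 e1)"
  then have v: "v < m*6" by (simp add: verts_def)
  have c: "v div 6 < m" using v by (simp add: less_mult_imp_div_less)
  have r: "v mod 6 < 6" by simp
  have p: "partner (v mod 6) < 6" by (simp add: partner_def)
  let ?u = "6 * (v div 6) + partner (v mod 6)"
  have u1: "?u div 6 = v div 6" "?u mod 6 = partner (v mod 6)" using p by auto
  have u2: "?u < m*6" using c p by linarith
  have "e1 (v mod 6) (partner (v mod 6))"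
    using r unfolding six by (elim disjE) (simp_all add: e1_def partner_def)
  then have "adj (copies m 6 e1) v ?u" unfolding adj_copies using v u1 u2 by simp
  then show "\<exists>u. adj (copies m 6 e1) v u" by blast
qed

lemma G2_isolated: "m > 0 \<Longrightarrow> 5 \<in> verts (copies m 6 e2) \<and> (\<forall>u. \<not> adj (copies m 6 e2) 5 u)"
  by (auto simp: verts_def adj_copies e2_def)

lemma simple_copies:
  assumes "\<And>a b. e a b = e b a" "\<And>a. \<not> e a a"
  shows "simple_graph (copies m n e)"
  using assms unfolding simple_graph_def copies_def by auto

theorem corollary5p2:
  fixes k :: nat
  assumes "k > 0"
  shows "\<exists>G1 G2. simple_graph G1 \<and> simple_graph G2 \<and>
           \<not> graph_iso G1 G2 \<and> cospectral G1 G2 \<and>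
           zero_forcing_number G1 > zero_forcing_number G2 + k"
proof (intro exI conjI)
  let ?m = "k + 1"
  show "simple_graph (copies ?m 6 e1)" by (rule simple_copies) (auto simp: e1_def)
  show "simple_graph (copies ?m 6 e2)" by (rule simple_copies) (auto simp: e2_def)
  show "\<not> graph_iso (copies ?m 6 e1) (copies ?m 6 e2)"
    using iso_no_isolated[OF _ G1_no_isolated, of ?m "copies ?m 6 e2" 5] G2_isolated[of ?m] by auto
  show "cospectral (copies ?m 6 e1) (copies ?m 6 e2)"
    unfolding cospectral_def char_poly_copies[of 6, simplified] cospec_base ..
  have "zero_forcing_number (copies ?m 6 e2) \<le> 2 * ?m"
    using zfn_le[OF Z2_zfs] Z2_card by (meson le_trans)
  moreover have "zero_forcing_number (copies ?m 6 e1) \<ge> 3 * ?m"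
    by (rule zfn_ge) (rule Z1_card)
  ultimately show "zero_forcing_number (copies ?m 6 e1) > zero_forcing_number (copies ?m 6 e2) + k"
    by (simp add: algebra_simps)
qed

end
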